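(* Let $V(l_1),\ldots,V(l_6)$ be six real lines in $\mathbf{P}^2$, no three of which have a point in common, and fix an affine chart $\mathbb{R}^2 \subset \mathbf{P}^2(\mathbb{R})$ (with $\mathbb{C}^2 \subset \mathbf{P}^2(\mathbb{C})$) such that none of the six lines is the line at infinity. Then there is a union $E \subset \mathbb{R}^2$ of finitely many $1$-dimensional linear subspaces with the following property. For every $b \in \mathbb{R}^2 \setminus E$ and every differentiable map $\gamma_0\colon \mathbb{R}/\mathbb{Z} \to \mathbb{R}^2$ whose image meets the real branch locus $V(l_1\cdots l_6)(\mathbb{R})$ only in the points $\gamma_0(\overline{t}_1),\ldots,\gamma_0(\overline{t}_n)$ ($n \in\{3,4,5\}$), each of which is a double point of the arrangement (a point on exactly two of the lines), the spheroid $\alpha'\colon S^2 \to \mathbf{P}^2(\mathbb{C})$ defined below meets the branch locus $V(l_1\cdots l_6)$ only in the images of the points $(\overline{t}_i, 0)$, $i=1,\ldots,n$, i.e. only in the three to five real points $\gamma_0(\overline{t}_i)$. Construction of $\alpha'$: let $\gamma'\colon (\mathbb{R}/\mathbb{Z}) \times \mathbb{R} \to \mathbb{C}^2 \subset \mathbf{P}^2(\mathbb{C})$, $(t,u) \mapsto \gamma_0(t) + \mathrm{i}\,u b$. The limits $\lim_{u\to\pm\infty}\gamma'(t,u)$ exist in $\mathbf{P}^2(\mathbb{C})$ and are independent of $t$ (both equal the point at infinity in direction $b$), so $\gamma'$ induces a continuous map $\alpha'$ from $(\mathbb{R}/\mathbb{Z}) \times [-\infty,\infty]$ with $(\mathbb{R}/\mathbb{Z})\times\{\infty\}$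 and $(\mathbb{R}/\mathbb{Z})\times\{-\infty\}$ each collapsed to a point, which is the suspension $S(S^1) \cong S^2$. *)

theory Defs
  imports "HOL-Analysis.Analysis"
begin

(* A real line V(l) in P^2 is given by a real linear form l(x,y,z) = a x + b y + c z,
   (a,b,c) \<noteq> 0.  Points of P^2(K) are represented by nonzero homogeneous
   coordinate vectors in K^3 (all statements below are invariant under scaling). *)
type_synonym rform = "real \<times> real \<times> real"
type_synonym cpt = "complex \<times> complex \<times> complex"

definition evalC :: "rform \<Rightarrow> cpt \<Rightarrow> complex" where
  "evalC l p = (case l of (a, b, c) \<Rightarrow> case p of (x, y, z) \<Rightarrow>
      of_real a * x + of_real b * y + of_real c * z)"

definition evalR :: "rform \<Rightarrow> real \<times> real \<times> real \<Rightarrow> real" where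
  "evalR l p = (case l of (a, b, c) \<Rightarrow> case p of (x, y, z) \<Rightarrow> a * x + b * y + c * z)"

definition branch_locus :: "(nat \<Rightarrow> rform) \<Rightarrow> cpt set" where
  "branch_locus l = {p. p \<noteq> (0, 0, 0) \<and> (\<Prod>j\<in>{1..6::nat}. evalC (l j) p) = 0}"

definition proj_eq :: "cpt \<Rightarrow> cpt \<Rightarrow> bool" where
  "proj_eq p q = (\<exists>c. c \<noteq> 0 \<and> p = (c * fst q, c * fst (snd q), c * snd (snd q)))"

(* affine chart C^2 \<subseteq> P^2(C), (x,y) \<mapsto> [x:y:1]; line at infinity is z = 0 *)
definition chart :: "complex \<times> complex \<Rightarrow> cpt" where
  "chart q = (fst q, snd q, 1)"

definition embR :: "real \<times> real \<Rightarrow> complex \<times> complex" where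
  "embR q = (complex_of_real (fst q), complex_of_real (snd q))"

definition real_branch_locus :: "(nat \<Rightarrow> rform) \<Rightarrow> (real \<times> real) set" where
  "real_branch_locus l = {q. chart (embR q) \<in> branch_locus l}"

definition double_point :: "(nat \<Rightarrow> rform) \<Rightarrow> real \<times> real \<Rightarrow> bool" where
  "double_point l q = (card {j\<in>{1..6::nat}. evalC (l j) (chart (embR q)) = 0} = 2)"

definition gamma' :: "(real \<Rightarrow> real \<times> real) \<Rightarrow> real \<times> real \<Rightarrow> real \<Rightarrow> real \<Rightarrow> cpt" where
  "gamma' \<gamma>0 b t u = chart (complex_of_real (fst (\<gamma>0 t)) + \<i> * complex_of_real (u * fst b),
                            complex_of_real (snd (\<gamma>0 t)) + \<i> * complex_of_real (u * snd b))"

(* the spheroid alpha' on (R/Z) \<times> [-\<infinity>,\<infinity>] (the circle coordinate t taken in R, with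
   gamma0 1-periodic); both ends u = \<plusminus>\<infinity> go to the point at infinity [b_1:b_2:0].
   The suspension S(S^1) is the quotient collapsing u = \<infinity> and u = -\<infinity>; the image
   of alpha' is the same. *)
definition alpha' :: "(real \<Rightarrow> real \<times> real) \<Rightarrow> real \<times> real \<Rightarrow> real \<times> ereal \<Rightarrow> cpt" where
  "alpha' \<gamma>0 b tu = (if snd tu = \<infinity> \<or> snd tu = -\<infinity>
      then (complex_of_real (fst b), complex_of_real (snd b), 0)
      else gamma' \<gamma>0 b (fst tu) (real_of_ereal (snd tu)))"

end

theory Submission
  imports Defs
begin

lemma evalC_gamma':
  "evalC (a, bb, c) (gamma' g b s u) =
     complex_of_real (a * fst (g s) + bb * snd (g s) + c) +
     \<i> * complex_of_real (u * (a * fst b + bb * snd b))"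
  by (simp add: evalC_def gamma'_def chart_def algebra_simps)

lemma evalC_zero_iff:
  "evalC (a, bb, c) (gamma' g b s u) = 0 \<longleftrightarrow>
     a * fst (g s) + bb * snd (g s) + c = 0 \<and> u * (a * fst b + bb * snd b) = 0"
  unfolding evalC_gamma' by (simp add: complex_eq_iff)

lemma in_span:
  assumes "(a::real, bb) \<noteq> (0, 0)" "a * fst b + bb * snd b = 0"
  shows "b \<in> range (\<lambda>s::real. s *\<^sub>R (- bb, a))"
proof (cases "a = 0")
  case True
  then have "bb \<noteq> 0" using assms by auto
  then have "snd b = 0" using assms True by simp
  then show ?thesis using True \<open>bb \<noteq> 0\<close>
    by (intro image_eqI[where x="- fst b / bb"]) (auto simp: prod_eq_iff)
next
  case False
  have "fst b = - bb * snd b / a" using assms False by (simp add: field_simps)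
  then show ?thesis using False
    by (intro image_eqI[where x="snd b / a"]) (auto simp: prod_eq_iff)
qed

theorem lemma4p2:
  fixes l :: "nat \<Rightarrow> rform"
  assumes nonzero: "\<forall>j\<in>{1..6}. l j \<noteq> (0, 0, 0)"
    and no_three: "\<forall>i\<in>{1..6}. \<forall>j\<in>{1..6}. \<forall>k\<in>{1..6}. i \<noteq> j \<and> i \<noteq> k \<and> j \<noteq> k \<longrightarrow>
          \<not> (\<exists>p. p \<noteq> (0, 0, 0) \<and> evalR (l i) p = 0 \<and> evalR (l j) p = 0 \<and> evalR (l k) p = 0)"
    and not_infty: "\<forall>j\<in>{1..6}. \<not> (\<exists>c. l j = (0, 0, c))"
  shows "\<exists>E :: (real \<times> real) set.
     (\<exists>D. finite D \<and> (0, 0) \<notin> D \<and> E = (\<Union>v\<in>D. range (\<lambda>s::real. s *\<^sub>R v))) \<and>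
     (\<forall>b. b \<notin> E \<longrightarrow>
       (\<forall>(\<gamma>0 :: real \<Rightarrow> real \<times> real) (n :: nat) (t :: nat \<Rightarrow> real).
          (\<forall>s. \<gamma>0 (s + 1) = \<gamma>0 s) \<and> (\<forall>s. \<gamma>0 differentiable (at s)) \<and>
          n \<in> {3, 4, 5} \<and> (\<forall>i\<in>{1..n}. t i \<in> {0..<1}) \<and> inj_on t {1..n} \<and>
          (\<forall>s. \<gamma>0 s \<in> real_branch_locus l \<longrightarrow> (\<exists>i\<in>{1..n}. \<gamma>0 s = \<gamma>0 (t i))) \<and>
          (\<forall>i\<in>{1..n}. double_point l (\<gamma>0 (t i)))
          \<longrightarrow>
          (\<forall>s (u :: ereal). alpha' \<gamma>0 b (s, u) \<in> branch_locus l \<longrightarrow>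
              (\<exists>i\<in>{1..n}. proj_eq (alpha' \<gamma>0 b (s, u)) (alpha' \<gamma>0 b (t i, 0))))))"
proof -
  define D where "D = (\<lambda>j. (- fst (snd (l j)), fst (l j))) ` {1..6::nat}"
  define E where "E = (\<Union>v\<in>D. range (\<lambda>s::real. s *\<^sub>R v))"
  have D0: "(0, 0) \<notin> D"
  proof
    assume "(0, 0) \<in> D"
    then obtain j where j: "j \<in> {1..6}" "fst (snd (l j)) = 0" "fst (l j) = 0"
      by (auto simp: D_def)
    then have "l j = (0, 0, snd (snd (l j)))" by (simp add: prod_eq_iff)
    then show False using not_infty j(1) by blast
  qed
  have key: "\<forall>j\<in>{1..6}. fst (l j) * fst b + fst (snd (l j)) * snd b \<noteq> 0" if "b \<notin> E" for b
  proof (intro ballI notI)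
    fix j assume j: "j \<in> {1..6::nat}" and z: "fst (l j) * fst b + fst (snd (l j)) * snd b = 0"
    have "(fst (l j), fst (snd (l j))) \<noteq> (0, 0)"
    proof
      assume "(fst (l j), fst (snd (l j))) = (0, 0)"
      then have "l j = (0, 0, snd (snd (l j)))" by (simp add: prod_eq_iff)
      then show False using not_infty j by blast
    qed
    from in_span[OF this z] have "b \<in> range (\<lambda>s::real. s *\<^sub>R (- fst (snd (l j)), fst (l j)))" .
    then have "b \<in> E" using j unfolding E_def D_def by blast
    then show False using that by simp
  qed
  have main: "\<exists>i\<in>{1..n}. proj_eq (alpha' \<gamma>0 b (s, u)) (alpha' \<gamma>0 b (t i, 0))"
    if bE: "b \<notin> E"
      and hyp: "\<forall>s. \<gamma>0 s \<in> real_branch_locus l \<longrightarrow> (\<exists>i\<in>{1..n}. \<gamma>0 s = \<gamma>0 (t i))"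
      and inb: "alpha' \<gamma>0 b (s, u) \<in> branch_locus l"
    for b \<gamma>0 n t s and u :: ereal
  proof -
    have k: "\<forall>j\<in>{1..6}. fst (l j) * fst b + fst (snd (l j)) * snd b \<noteq> 0"
      using key bE by blast
    show ?thesis
    proof (cases "u = \<infinity> \<or> u = -\<infinity>")
      case True
      then have "alpha' \<gamma>0 b (s, u) = (complex_of_real (fst b), complex_of_real (snd b), 0)"
        by (auto simp: alpha'_def)
      with inb obtain j where j: "j \<in> {1..6::nat}"
        and "evalC (l j) (complex_of_real (fst b), complex_of_real (snd b), 0) = 0"
        by (auto simp: branch_locus_def)
      then have "complex_of_real (fst (l j) * fst b + fst (snd (l j)) * snd b) = 0"
        by (simp add: evalC_def split: prod.splits)
      then have "fst (l j) * fst b + fst (snd (l j)) * snd b = 0" by (simp only: of_real_eq_0_iff)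
      then show ?thesis using k j by blast
    next
      case False
      define r where "r = real_of_ereal u"
      have al: "alpha' \<gamma>0 b (s, u) = gamma' \<gamma>0 b s r"
        using False by (simp add: alpha'_def r_def)
      with inb obtain j where j: "j \<in> {1..6::nat}"
        and z: "evalC (l j) (gamma' \<gamma>0 b s r) = 0"
        by (auto simp: branch_locus_def)
      obtain a bb c where lj: "l j = (a, bb, c)" by (cases "l j") auto
      from z have z1: "a * fst (\<gamma>0 s) + bb * snd (\<gamma>0 s) + c = 0"
        and z2: "r * (a * fst b + bb * snd b) = 0"
        unfolding lj evalC_zero_iff by auto
      have "a * fst b + bb * snd b \<noteq> 0" using k j lj by fastforce
      then have "r = 0" using z2 by simp
      then have u0: "u = 0" using False r_def by (cases u) auto
      have "evalC (l j) (chart (embR (\<gamma>0 s))) = complex_of_real (a * fst (\<gamma>0 s) + bb * snd (\<gamma>0 s) + c)"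
        by (simp add: lj evalC_def chart_def embR_def)
      then have "evalC (l j) (chart (embR (\<gamma>0 s))) = 0" using z1 by simp
      then have "\<gamma>0 s \<in> real_branch_locus l"
        using j by (auto simp: real_branch_locus_def branch_locus_def chart_def)
      then obtain i where i: "i \<in> {1..n}" "\<gamma>0 s = \<gamma>0 (t i)" using hyp by blast
      have "alpha' \<gamma>0 b (s, u) = alpha' \<gamma>0 b (t i, 0)"
        using u0 i(2) by (simp add: alpha'_def gamma'_def zero_ereal_def)
      then have "proj_eq (alpha' \<gamma>0 b (s, u)) (alpha' \<gamma>0 b (t i, 0))"
        unfolding proj_eq_def by (intro exI[where x=1]) (simp add: prod_eq_iff)
      then show ?thesis using i by blast
    qed
  qed
  show ?thesis
    apply (rule exI[where x=E])
    apply (intro conjI)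
     apply (rule exI[where x=D]) apply (simp add: D_def E_def)
    using D0 apply (simp add: D_def)
    using main by blast
qed

end
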